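(* Let $T_{abc}$ be the torsion tensor of a 4-dimensional teleparallel geometry, decomposed as $T_{abc}=\tfrac23(t_{abc}-t_{acb})-\tfrac13(g_{ab}V_c-g_{ac}V_b)+\epsilon_{abcd}A^d$ into its vector part $V_a=T^b{}_{ba}$, axial part $A^a=\tfrac16\epsilon^{abcd}T_{bcd}$ and purely tensor part $t_{(ab)c}=\tfrac12(T_{abc}+T_{bac})-\tfrac16(g_{ca}V_b+g_{cb}V_a)+\tfrac13 g_{ab}V_c$. Then $T_{abc}$ is of alignment type II or more special if and only if, relative to a common null coframe, (i) the purely tensor part $t_{(ab)c}$ is of alignment type II, III, N or O, and (ii) the vector part $V$ and the axial part $A$ are each of alignment type II, III or O.
   Context: A teleparallel geometry is a 4-dimensional manifold with a coframe $\{\mathbf h^a\}$, metric $g=\eta_{ab}\mathbf h^a\otimes\mathbf h^b$ of Lorentzian signature, and a flat metric-compatible spin connection $\omega^a{}_b$; the torsion is $T^a{}_{\mu\nu}=\partial_\mu h^a{}_\nu-\partial_\nu h^a{}_\mu+\omega^a{}_{b\mu}h^b{}_\nu-\omega^a{}_{b\nu}h^b{}_\mu$, with frame indices lowered by $\eta_{ab}$; $\epsilon_{abcd}$ is the volume form. A complex null coframe is $\{\mathbf h^1,\mathbf h^2,\mathbf h^3,\mathbf h^4\}=\{\mathbf n,\boldsymbol\ell,\bar{\mathbf m},\mathbf m\}$ with $\eta_{12}=\eta_{21}=-1$, $\eta_{34}=\eta_{43}=1$, other $\eta_{ab}=0$. The boost weight of a covariant frame component $T_{a_1\dots a_r}$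 is the number of indices equal to $1$ minus the number equal to $2$. Relative to a given null coframe, a nonzero tensor is of alignment type II or more special if all its components of positive boost weight vanish, of type III or more special if all components of boost weight $\ge0$ vanish, of type N if all components of boost weight $\ge -1$ vanish, and of type O if it vanishes; a tensor is of a given type if such a null coframe exists. *)

theory Defs
  imports Complex_Main
begin

text \<open>Algebraic (pointwise) setting: frame components of tensors with respect to a
complex null coframe (n, l, mbar, m) are functions of frame indices in {1..4}.\<close>

definition idx :: "nat set" where "idx = {1..4}"

text \<open>Frame metric eta_ab of the complex null coframe; it is its own inverse.\<close>
definition eta :: "nat \<Rightarrow> nat \<Rightarrow> complex" where
  "eta a b = (if (a = 1 \<and> b = 2) \<or> (a = 2 \<and> b = 1) then -1
              else if (a = 3 \<and> b = 4) \<or> (a = 4 \<and> b = 3) then 1 else 0)"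

definition eta_inv :: "nat \<Rightarrow> nat \<Rightarrow> complex" where
  "eta_inv a b = (if (a = 1 \<and> b = 2) \<or> (a = 2 \<and> b = 1) then -1
              else if (a = 3 \<and> b = 4) \<or> (a = 4 \<and> b = 3) then 1 else 0)"

definition levi :: "nat \<Rightarrow> nat \<Rightarrow> nat \<Rightarrow> nat \<Rightarrow> complex" where
  "levi a b c d = (if {a,b,c,d} \<subseteq> idx then
     of_int (sgn ((int b - int a) * (int c - int a) * (int d - int a) *
                  (int c - int b) * (int d - int b) * (int d - int c))) else 0)"

text \<open>Volume form epsilon_abcd in the complex null frame: epsilon_1234 = e, where
  e is i or -i (orientation); e^2 = -1 as required by Lorentzian signature.\<close>
definition eps_dn :: "complex \<Rightarrow> nat \<Rightarrow> nat \<Rightarrow> nat \<Rightarrow> nat \<Rightarrow> complex" where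
  "eps_dn e a b c d = e * levi a b c d"

definition eps_up :: "complex \<Rightarrow> nat \<Rightarrow> nat \<Rightarrow> nat \<Rightarrow> nat \<Rightarrow> complex" where
  "eps_up e a b c d = (\<Sum>p\<in>idx. \<Sum>q\<in>idx. \<Sum>r\<in>idx. \<Sum>s\<in>idx.
      eta_inv a p * eta_inv b q * eta_inv c r * eta_inv d s * eps_dn e p q r s)"

definition vecpart :: "(nat \<Rightarrow> nat \<Rightarrow> nat \<Rightarrow> complex) \<Rightarrow> nat \<Rightarrow> complex" where
  "vecpart T a = (\<Sum>b\<in>idx. \<Sum>c\<in>idx. eta_inv b c * T c b a)"

definition axial_up :: "complex \<Rightarrow> (nat \<Rightarrow> nat \<Rightarrow> nat \<Rightarrow> complex) \<Rightarrow> nat \<Rightarrow> complex" where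
  "axial_up e T a = (1/6) * (\<Sum>b\<in>idx. \<Sum>c\<in>idx. \<Sum>d\<in>idx. eps_up e a b c d * T b c d)"

definition axial :: "complex \<Rightarrow> (nat \<Rightarrow> nat \<Rightarrow> nat \<Rightarrow> complex) \<Rightarrow> nat \<Rightarrow> complex" where
  "axial e T a = (\<Sum>b\<in>idx. eta a b * axial_up e T b)"

definition tenspart :: "(nat \<Rightarrow> nat \<Rightarrow> nat \<Rightarrow> complex) \<Rightarrow> nat \<Rightarrow> nat \<Rightarrow> nat \<Rightarrow> complex" where
  "tenspart T a b c = (1/2) * (T a b c + T b a c)
     - (1/6) * (eta c a * vecpart T b + eta c b * vecpart T a)
     + (1/3) * eta a b * vecpart T c"

definition bw :: "nat \<Rightarrow> int" where
  "bw a = (if a = 1 then 1 else if a = 2 then -1 else 0)"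

definition typeII_or_special_1 :: "(nat \<Rightarrow> complex) \<Rightarrow> bool" where
  "typeII_or_special_1 X \<longleftrightarrow> (\<forall>a\<in>idx. bw a > 0 \<longrightarrow> X a = 0)"

definition typeII_or_special_3 :: "(nat \<Rightarrow> nat \<Rightarrow> nat \<Rightarrow> complex) \<Rightarrow> bool" where
  "typeII_or_special_3 X \<longleftrightarrow>
     (\<forall>a\<in>idx. \<forall>b\<in>idx. \<forall>c\<in>idx. bw a + bw b + bw c > 0 \<longrightarrow> X a b c = 0)"

text \<open>Complex conjugation of frame indices: n, l real, conj m = mbar.\<close>
definition cswap :: "nat \<Rightarrow> nat" where
  "cswap a = (if a = 3 then 4 else if a = 4 then 3 else a)"

text \<open>Torsion tensor components: antisymmetric in the last two indices and real
(frame components in the complex null frame satisfy the induced reality condition).\<close>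
definition torsion_like :: "(nat \<Rightarrow> nat \<Rightarrow> nat \<Rightarrow> complex) \<Rightarrow> bool" where
  "torsion_like T \<longleftrightarrow>
     (\<forall>a\<in>idx. \<forall>b\<in>idx. \<forall>c\<in>idx. T a b c = - T a c b \<and>
        cnj (T a b c) = T (cswap a) (cswap b) (cswap c))"

end

theory Submission imports Defs begin

lemma idx_eq: "idx = {1,2,3,4}" by (auto simp: idx_def)
lemma sum_idx: "sum f idx = f 1 + f 2 + f 3 + f 4" by (simp add: idx_eq add.assoc)
lemma ball_idx: "(\<forall>a\<in>idx. P a) \<longleftrightarrow> P 1 \<and> P 2 \<and> P 3 \<and> P 4" by (simp add: idx_eq)

definition sw :: "nat \<Rightarrow> nat" where "sw a = (if a = 1 then 2 else if a = 2 then 1 else if a = 3 then 4 else 3)"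
definition sg :: "nat \<Rightarrow> complex" where "sg a = (if a = 1 \<or> a = 2 then -1 else 1)"

lemma eta_inv_sum: "a \<in> idx \<Longrightarrow> (\<Sum>p\<in>idx. eta_inv a p * g p) = sg a * g (sw a)"
  by (auto simp: idx_eq eta_inv_def sg_def sw_def)

lemma eps_up_nested: "eps_up e a b c d = (\<Sum>p\<in>idx. eta_inv a p * (\<Sum>q\<in>idx. eta_inv b q * (\<Sum>r\<in>idx. eta_inv c r * (\<Sum>s\<in>idx. eta_inv d s * eps_dn e p q r s))))"
  by (simp add: eps_up_def sum_distrib_left mult.assoc)

lemma eps_up_eq: "a \<in> idx \<Longrightarrow> b \<in> idx \<Longrightarrow> c \<in> idx \<Longrightarrow> d \<in> idx \<Longrightarrow>
  eps_up e a b c d = sg a * (sg b * (sg c * (sg d * eps_dn e (sw a) (sw b) (sw c) (sw d))))"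
  by (simp add: eps_up_nested eta_inv_sum)

lemma axial1: "axial e T 1 = e/3 * (T 1 3 4 - T 1 4 3 - T 3 1 4 + T 3 4 1 + T 4 1 3 - T 4 3 1) / 2"
proof -
  have "axial e T 1 = - axial_up e T 2" by (simp add: axial_def sum_idx eta_def)
  also have "axial_up e T 2 = (1/6) * (\<Sum>b\<in>idx. \<Sum>c\<in>idx. \<Sum>d\<in>idx. sg 2 * (sg b * (sg c * (sg d * eps_dn e (sw 2) (sw b) (sw c) (sw d)))) * T b c d)"
    unfolding axial_up_def by (intro arg_cong[where f="\<lambda>x. _ * x"] sum.cong refl) (simp add: eps_up_eq idx_def)
  also have "\<dots> = - e/3 * (T 1 3 4 - T 1 4 3 - T 3 1 4 + T 3 4 1 + T 4 1 3 - T 4 3 1) / 2"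
    unfolding sum_idx by (simp add: sg_def sw_def eps_dn_def levi_def idx_eq) (simp add: algebra_simps)
  finally show ?thesis by simp
qed

lemma vec1: "vecpart T 1 = - T 2 1 1 - T 1 2 1 + T 4 3 1 + T 3 4 1"
  by (simp add: vecpart_def sum_idx eta_inv_def)
lemma lin1: "3*y+3*z = (v::complex) \<Longrightarrow> v = 0 \<Longrightarrow> y = -z" by algebra
lemma lin2: "(- y + w)/2 - (1/6) * (v::complex) = 0 \<Longrightarrow> v = 0 \<Longrightarrow> w = y" by algebra
lemma lin3: "(y::complex) - z + w = 0 \<Longrightarrow> y = -z \<Longrightarrow> w = y \<Longrightarrow> z = 0" by algebra
lemma lin0: "(x::complex) - y - z + w + u - r = 0 \<Longrightarrow> y = -x \<Longrightarrow> w = - z \<Longrightarrow> r = -u \<Longrightarrow> x - z + u = 0" by algebra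

lemma anti_simps:
  fixes T :: "nat \<Rightarrow> nat \<Rightarrow> nat \<Rightarrow> complex"
  assumes A: "\<forall>a\<in>idx. \<forall>b\<in>idx. \<forall>c\<in>idx. T a b c = - T a c b" and a: "a \<in> idx"
  shows "T a 2 1 = - T a 1 2" "T a 3 1 = - T a 1 3" "T a 4 1 = - T a 1 4"
    "T a 3 2 = - T a 2 3" "T a 4 2 = - T a 2 4" "T a 4 3 = - T a 3 4"
    "T a 1 1 = 0" "T a 2 2 = 0" "T a 3 3 = 0" "T a 4 4 = 0"
proof -
  have h: "\<And>b c. b \<in> idx \<Longrightarrow> c \<in> idx \<Longrightarrow> T a b c = - T a c b" using A a by blast
  have z: "x = 0" if "x = - x" for x :: complex
  proof -
    have "2 * x = 0" using that by simp
    then show ?thesis by simp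
  qed
  show "T a 2 1 = - T a 1 2" "T a 3 1 = - T a 1 3" "T a 4 1 = - T a 1 4"
    "T a 3 2 = - T a 2 3" "T a 4 2 = - T a 2 4" "T a 4 3 = - T a 3 4"
    by (rule h; simp add: idx_eq)+
  have "T a 1 1 = - T a 1 1" by (rule h) (simp_all add: idx_eq)
  then show "T a 1 1 = 0" by algebra
  have "T a 2 2 = - T a 2 2" by (rule h) (simp_all add: idx_eq)
  then show "T a 2 2 = 0" by algebra
  have "T a 3 3 = - T a 3 3" by (rule h) (simp_all add: idx_eq)
  then show "T a 3 3 = 0" by algebra
  have "T a 4 4 = - T a 4 4" by (rule h) (simp_all add: idx_eq)
  then show "T a 4 4 = 0" by algebra
qed

theorem lemma1:
  fixes T :: "nat \<Rightarrow> nat \<Rightarrow> nat \<Rightarrow> complex" and e :: complex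
  assumes "e = \<i> \<or> e = - \<i>"
    and "torsion_like T"
  shows "typeII_or_special_3 T \<longleftrightarrow>
           (typeII_or_special_3 (tenspart T) \<and>
            typeII_or_special_1 (vecpart T) \<and>
            typeII_or_special_1 (axial e T))"
proof -
  have A: "\<forall>a\<in>idx. \<forall>b\<in>idx. \<forall>c\<in>idx. T a b c = - T a c b"
    using assms(2) unfolding torsion_like_def by blast
  have e0: "e \<noteq> 0" using assms(1) by auto
  note AS = anti_simps[OF A] anti_simps[OF A, unfolded One_nat_def]
  have vec: "vecpart T c = (\<Sum>b\<in>idx. \<Sum>d\<in>idx. eta_inv b d * T d b c)" for c
    by (simp add: vecpart_def)
  define P where "P \<longleftrightarrow> T 1 1 2 = 0 \<and> T 1 1 3 = 0 \<and> T 1 1 4 = 0 \<and> T 1 3 4 = 0 \<and>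
     T 3 1 3 = 0 \<and> T 3 1 4 = 0 \<and> T 4 1 3 = 0 \<and> T 4 1 4 = 0"
  have S1: "typeII_or_special_3 T \<longleftrightarrow> P"
  proof
    assume "typeII_or_special_3 T"
    then show P unfolding typeII_or_special_3_def P_def by (simp add: idx_eq bw_def)
  next
    assume P
    then show "typeII_or_special_3 T" unfolding typeII_or_special_3_def P_def ball_idx
      by (simp add: bw_def AS idx_eq)
  qed
  have S2: "(typeII_or_special_3 (tenspart T) \<and> typeII_or_special_1 (vecpart T) \<and>
            typeII_or_special_1 (axial e T)) \<longleftrightarrow> P"
  proof
    assume H: "typeII_or_special_3 (tenspart T) \<and> typeII_or_special_1 (vecpart T) \<and>
            typeII_or_special_1 (axial e T)"
    have t: "tenspart T 1 1 2 = 0" "tenspart T 1 1 3 = 0" "tenspart T 1 1 4 = 0"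
       "tenspart T 1 3 4 = 0" "tenspart T 1 4 3 = 0" "tenspart T 3 4 1 = 0"
       "tenspart T 3 3 1 = 0" "tenspart T 4 4 1 = 0"
      using H unfolding typeII_or_special_3_def by (simp_all add: idx_eq bw_def)
    have v: "vecpart T 1 = 0" using H unfolding typeII_or_special_1_def by (simp add: idx_eq bw_def)
    have ax: "axial e T 1 = 0" using H unfolding typeII_or_special_1_def by (simp add: idx_eq bw_def)
    have v1: "T 1 1 2 - T 4 1 3 - T 3 1 4 = 0" using v by (simp add: vec1 vec1[unfolded One_nat_def] AS idx_eq)
    have a1: "T 1 3 4 - T 3 1 4 + T 4 1 3 = 0" proof -
      have "e / 3 * (T 1 3 4 - T 1 4 3 - T 3 1 4 + T 3 4 1 + T 4 1 3 - T 4 3 1) / 2 = 0"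
        using ax unfolding axial1 .
      then have "T 1 3 4 - T 1 4 3 - T 3 1 4 + T 3 4 1 + T 4 1 3 - T 4 3 1 = 0" using e0 by simp
      moreover have "T 1 4 3 = - T 1 3 4" "T 3 4 1 = - T 3 1 4" "T 4 3 1 = - T 4 1 3"
        by (simp_all add: AS idx_eq)
      ultimately show ?thesis by (rule lin0)
    qed
    have t1: "T 1 1 2 + (1/3) * vecpart T 1 = 0"
      using t(1) by (simp add: tenspart_def eta_def AS idx_eq algebra_simps)
    have t2: "T 1 1 3 = 0"
      using t(2) by (simp add: tenspart_def eta_def AS idx_eq algebra_simps)
    have t3: "T 1 1 4 = 0"
      using t(3) by (simp add: tenspart_def eta_def AS idx_eq algebra_simps)
    have t4: "3 * T 1 3 4 + 3 * T 3 1 4 = vecpart T 1"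
      using t(4) by (simp add: tenspart_def eta_def AS idx_eq algebra_simps)
    have t5: "(- T 1 3 4 + T 4 1 3)/2 - (1/6) * vecpart T 1 = 0"
      using t(5) by (simp add: tenspart_def eta_def AS idx_eq algebra_simps)
    have t7: "T 3 1 3 = 0"
      using t(7) by (simp add: tenspart_def eta_def AS idx_eq algebra_simps)
    have t8: "T 4 1 4 = 0"
      using t(8) by (simp add: tenspart_def eta_def AS idx_eq algebra_simps)
    have x0: "T 1 1 2 = 0" using t1 v by simp
    have yz: "T 1 3 4 = - T 3 1 4" using t4 v by (rule lin1)
    have wy: "T 4 1 3 = T 1 3 4" using t5 v by (rule lin2)
    have z0: "T 3 1 4 = 0" using a1 yz wy by (rule lin3)
    show P unfolding P_def using x0 yz wy z0 t2 t3 t7 t8 by simp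
  next
    assume P
    then have p: "T 1 1 2 = 0" "T 1 1 3 = 0" "T 1 1 4 = 0" "T 1 3 4 = 0"
     "T 3 1 3 = 0" "T 3 1 4 = 0" "T 4 1 3 = 0" "T 4 1 4 = 0" unfolding P_def by auto
    have V1: "vecpart T 1 = 0" unfolding vec1 using p by (simp add: AS idx_eq)
    have A1: "axial e T 1 = 0" unfolding axial1 using p by (simp add: AS idx_eq)
    note p' = p[unfolded One_nat_def] V1[unfolded One_nat_def]
    have "typeII_or_special_1 (vecpart T)" unfolding typeII_or_special_1_def ball_idx
      using V1 by (simp add: bw_def)
    moreover have "typeII_or_special_1 (axial e T)" unfolding typeII_or_special_1_def ball_idx
      using A1 by (simp add: bw_def)
    moreover have "typeII_or_special_3 (tenspart T)"
      unfolding typeII_or_special_3_def ball_idx tenspart_def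
      by (simp add: bw_def AS idx_eq eta_def p p' V1)
    ultimately show "typeII_or_special_3 (tenspart T) \<and> typeII_or_special_1 (vecpart T) \<and>
            typeII_or_special_1 (axial e T)" by blast
  qed
  show ?thesis using S1 S2 by simp
qed
end
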